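(* Let $\mathcal{X}_{\mathrm{sep}}$ denote the set of separable two-qubit $X$-states. Then $\max_{\rho\in\mathcal{X}_{\mathrm{sep}}} \mathcal{D}(\rho)=\tfrac14$, and every $\rho\in\mathcal{X}_{\mathrm{sep}}$ with $\mathcal{D}(\rho)=\tfrac14$ has rank $2$.
   Context: A two-qubit state is a density matrix $\rho$ (positive semidefinite, trace one) on $\mathbb{C}^2\otimes\mathbb{C}^2$; it is separable if it is a convex combination of product states $\rho_A\otimes\rho_B$. A two-qubit $X$-state is a state whose matrix in the computational basis $\{|00\rangle,|01\rangle,|10\rangle,|11\rangle\}$ has nonzero entries only on the main diagonal and the anti-diagonal, i.e. it has the form $\begin{pmatrix} a&0&0&p\\0&b&q&0\\0&\bar q&c&0\\ \bar p&0&0&d\end{pmatrix}$ with $a,b,c,d\ge0$ and $p,q\in\mathbb{C}$. The set $\Omega_0$ of classical-quantum (zero-discord) states consists of all states of the form $\sum_k p_k|\psi_k\rangle\langle\psi_k|\otimes\rho_k^B$, where $\{|\psi_k\rangle\}$ is an orthonormal basis of the first qubit, $p_k\ge0$ sum to one, and $\rho_k^B$ are states of the second qubit. The (normalized) geometric discord of a two-qubit state is $\mathcal{D}(\rho)=2\min_{\chi\in\Omega_0}\|\rho-\chi\|^2$, where $\|X\|^2=\operatorname{Tr}(X^\dagger X)$ is the squared Hilbert–Schmidt norm. Equivalently, writing $\rho=\frac14\big[I\otimes I+\sum_i x_i\sigma_i\otimes I+\sum_j y_j I\otimes\sigma_j+\sum_{i,j}T_{ij}\sigma_i\otimes\sigma_j\big]$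 with Pauli matrices $\sigma_1,\sigma_2,\sigma_3$, one has $\mathcal{D}(\rho)=\frac12\big[\|\mathbf{x}\|^2+\|T\|^2-\lambda_{\max}(\mathbf{x}\mathbf{x}^t+TT^t)\big]$. *)

theory Defs
  imports "HOL-Analysis.Analysis"
begin

text \<open>Qubit operators are complex 2x2 matrices indexed by the type 2 (elements 0, 1).
Two-qubit operators are indexed by pairs (i,j) :: 2 \<times> 2, i.e. the computational
basis vector |ij>.\<close>

type_synonym qmat = "complex^2^2"
type_synonym qqmat = "complex^(2\<times>2)^(2\<times>2)"

definition psd :: "complex^'n^'n \<Rightarrow> bool" where
  "psd M \<longleftrightarrow> (\<forall>v :: complex^'n.
     let q = (\<Sum>i\<in>UNIV. \<Sum>j\<in>UNIV. cnj (v$i) * M$i$j * v$j) in Im q = 0 \<and> Re q \<ge> 0)"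

definition is_state :: "complex^'n^'n \<Rightarrow> bool" where
  "is_state M \<longleftrightarrow> psd M \<and> trace M = 1"

definition kron :: "qmat \<Rightarrow> qmat \<Rightarrow> qqmat" where
  "kron A B = (\<chi> r c. A$(fst r)$(fst c) * B$(snd r)$(snd c))"

definition separable :: "qqmat \<Rightarrow> bool" where
  "separable \<rho> \<longleftrightarrow> (\<exists>(n::nat) (p::nat \<Rightarrow> real) (A::nat \<Rightarrow> qmat) (B::nat \<Rightarrow> qmat).
      (\<forall>k<n. p k \<ge> 0 \<and> is_state (A k) \<and> is_state (B k)) \<and> (\<Sum>k<n. p k) = 1 \<and>
      \<rho> = (\<Sum>k<n. p k *\<^sub>R kron (A k) (B k)))"

definition X_state :: "qqmat \<Rightarrow> bool" where
  "X_state \<rho> \<longleftrightarrow> is_state \<rho> \<and>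
     (\<forall>i j k l. \<rho>$(i,j)$(k,l) \<noteq> 0 \<longrightarrow> ((k,l) = (i,j) \<or> (k,l) = (1 - i, 1 - j)))"

definition ket_bra :: "complex^2 \<Rightarrow> qmat" where
  "ket_bra v = (\<chi> i j. v$i * cnj (v$j))"

definition cinner :: "complex^'n \<Rightarrow> complex^'n \<Rightarrow> complex" where
  "cinner u v = (\<Sum>i\<in>UNIV. cnj (u$i) * v$i)"

definition Omega0 :: "qqmat set" where
  "Omega0 = {X. \<exists>(\<psi>::2 \<Rightarrow> complex^2) (p::2 \<Rightarrow> real) (\<sigma>::2 \<Rightarrow> qmat).
      (\<forall>k l. cinner (\<psi> k) (\<psi> l) = (if k = l then 1 else 0)) \<and>
      (\<forall>k. p k \<ge> 0 \<and> is_state (\<sigma> k)) \<and> (\<Sum>k\<in>UNIV. p k) = 1 \<and>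
      X = (\<Sum>k\<in>UNIV. p k *\<^sub>R kron (ket_bra (\<psi> k)) (\<sigma> k))}"

definition hs_norm2 :: "complex^'n^'m \<Rightarrow> real" where
  "hs_norm2 X = (\<Sum>i\<in>UNIV. \<Sum>j\<in>UNIV. (cmod (X$i$j))^2)"

definition geometric_discord :: "qqmat \<Rightarrow> real" where
  "geometric_discord \<rho> = 2 * Inf ((\<lambda>X. hs_norm2 (\<rho> - X)) ` Omega0)"

end

theory Submission
  imports Defs
begin


lemma U2: "(UNIV::2 set) = {0,1}" using exhaust_2 by (metis (full_types) insertCI UNIV_eq_I  zero_neq_one)
lemma sum2: "sum f (UNIV::2 set) = f 0 + f 1" by (simp add: U2)
lemma U22: "(UNIV::(2\<times>2) set) = {(0,0),(0,1),(1,0),(1,1)}"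
proof -
  have "(UNIV::(2\<times>2) set) = (UNIV::2 set) \<times> (UNIV::2 set)" by simp
  also have "\<dots> = {(0,0),(0,1),(1,0),(1,1)}" unfolding U2 by auto
  finally show ?thesis .
qed
lemma sum22: "sum f (UNIV::(2\<times>2) set) = f (0,0) + f (0,1) + f (1,0) + f (1,1)"
  by (simp add: U22 algebra_simps)
lemma two_cases: "(x::2) = 0 \<or> x = 1" using U2 by auto
lemma one_minus_2[simp]: "(1::2) - 1 = 0" "(1::2) - 0 = 1" by simp_all

definition qf :: "complex^'n^'n \<Rightarrow> complex^'n \<Rightarrow> complex" where
  "qf M v = (\<Sum>i\<in>UNIV. \<Sum>j\<in>UNIV. cnj (v$i) * M$i$j * v$j)"

lemma psd_qf: "psd M \<longleftrightarrow> (\<forall>v. Im (qf M v) = 0 \<and> Re (qf M v) \<ge> 0)"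
  by (simp add: psd_def qf_def Let_def)

definition v2 :: "'n \<Rightarrow> 'n \<Rightarrow> complex \<Rightarrow> complex \<Rightarrow> complex^'n" where
  "v2 i j x y = (\<chi> k. if k = i then x else if k = j then y else 0)"

lemma sum_v2: fixes g :: "'n::finite \<Rightarrow> complex"
  assumes "i \<noteq> j"
  shows "(\<Sum>k\<in>UNIV. g k * (v2 i j x y)$k) = g i * x + g j * y"
    "(\<Sum>k\<in>UNIV. cnj ((v2 i j x y)$k) * g k) = cnj x * g i + cnj y * g j"
proof -
  have "(\<Sum>k\<in>UNIV. g k * (v2 i j x y)$k) = (\<Sum>k\<in>UNIV. (if k = i then g i * x else 0) + (if k = j then g j * y else 0))"
    by (rule sum.cong) (use assms in \<open>auto simp: v2_def\<close>)
  then show "(\<Sum>k\<in>UNIV. g k * (v2 i j x y)$k) = g i * x + g j * y"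
    by (simp add: sum.distrib)
  have "(\<Sum>k\<in>UNIV. cnj ((v2 i j x y)$k) * g k) = (\<Sum>k\<in>UNIV. (if k = i then cnj x * g i else 0) + (if k = j then cnj y * g j else 0))"
    by (rule sum.cong) (use assms in \<open>auto simp: v2_def\<close>)
  then show "(\<Sum>k\<in>UNIV. cnj ((v2 i j x y)$k) * g k) = cnj x * g i + cnj y * g j"
    by (simp add: sum.distrib)
qed

lemma qf_v2: fixes M :: "complex^'n^'n"
  assumes "i \<noteq> j"
  shows "qf M (v2 i j x y) = cnj x * M$i$i * x + cnj x * M$i$j * y + cnj y * M$j$i * x + cnj y * M$j$j * y"
proof -
  have "qf M (v2 i j x y) = (\<Sum>k\<in>UNIV. cnj ((v2 i j x y)$k) * (\<Sum>l\<in>UNIV. M$k$l * (v2 i j x y)$l))"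
    unfolding qf_def by (simp add: sum_distrib_left mult.assoc)
  also have "\<dots> = (\<Sum>k\<in>UNIV. cnj ((v2 i j x y)$k) * (M$k$i * x + M$k$j * y))"
    using sum_v2(1)[OF assms] by simp
  also have "\<dots> = cnj x * (M$i$i * x + M$i$j * y) + cnj y * (M$j$i * x + M$j$j * y)"
    using sum_v2(2)[OF assms, where g="\<lambda>k. M$k$i * x + M$k$j * y"] by simp
  finally show ?thesis by (simp add: algebra_simps)
qed


lemma cm_sq: "cmod z * cmod z = Re z * Re z + Im z * Im z"
  by (metis cmod_power2 power2_eq_square)
definition F2 :: "real \<Rightarrow> real \<Rightarrow> complex \<Rightarrow> complex \<Rightarrow> complex \<Rightarrow> complex" where
 "F2 P R S x y = cnj x * P * x + cnj x * S * y + cnj y * cnj S * x + cnj y * R * y"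

lemma F2_Im: "Im (F2 P R S x y) = 0"
  by (simp add: F2_def algebra_simps)
lemma F2_Re: "Re (F2 P R S x y) = P * (cmod x)^2 + R * (cmod y)^2 + 2 * Re (cnj x * S * y)"
  by (simp add: F2_def algebra_simps power2_eq_square cm_sq)

lemma H2c: assumes "\<forall>x y. Re (F2 P R S x y) \<ge> 0"
  shows "P \<ge> 0" "R \<ge> 0" "(cmod S)^2 \<le> P * R"
proof -
  show P: "P \<ge> 0" using assms[rule_format, of 1 0] by (simp add: F2_Re)
  show R: "R \<ge> 0" using assms[rule_format, of 0 1] by (simp add: F2_Re)
  have e1: "Re (F2 P R S (-S) P) = P * (P * R - (cmod S)^2)"
    by (simp add: F2_Re power2_eq_square cm_sq algebra_simps)
  show "(cmod S)^2 \<le> P * R"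
  proof (cases "P = 0")
    case False
    with P have "P > 0" by simp
    moreover have "P * (P * R - (cmod S)^2) \<ge> 0" using assms[rule_format, of "-S" P] e1 by simp
    ultimately show ?thesis by (simp add: zero_le_mult_iff)
  next
    case True
    show ?thesis
    proof (rule ccontr)
      assume "\<not> ?thesis"
      with True have S: "(cmod S)^2 > 0" by (simp add: not_le)
      define t where "t = (R + 1) / (2 * (cmod S)^2)"
      have "Re (F2 P R S (- (of_real t * S)) 1) = R - 2 * t * (cmod S)^2"
        using True by (simp add: F2_Re power2_eq_square cm_sq algebra_simps)
      also have "\<dots> = -1" using S by (simp add: t_def field_simps)
      finally show False using assms[rule_format, of "- (of_real t * S)" 1] by simp
    qed
  qed
qed

lemma H2: assumes "P \<ge> 0" "R \<ge> 0" "(cmod S)^2 \<le> P * R"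
  shows "Re (F2 P R S x y) \<ge> 0"
proof -
  have "Re (cnj x * S * y) \<ge> - (cmod x * cmod S * cmod y)"
  proof -
    have "\<bar>Re (cnj x * S * y)\<bar> \<le> cmod (cnj x * S * y)" by (rule abs_Re_le_cmod)
    also have "\<dots> = cmod x * cmod S * cmod y" by (simp add: norm_mult)
    finally show ?thesis by linarith
  qed
  moreover have "cmod S \<le> sqrt P * sqrt R"
    using assms by (metis norm_ge_zero real_le_rsqrt real_sqrt_mult)
  moreover have "P * (cmod x)^2 + R * (cmod y)^2 - 2 * (cmod x * (sqrt P * sqrt R) * cmod y) = (sqrt P * cmod x - sqrt R * cmod y)^2"
    using assms by (simp add: power2_diff power_mult_distrib real_sqrt_pow2 algebra_simps)
  moreover have "cmod x * cmod S * cmod y \<le> cmod x * (sqrt P * sqrt R) * cmod y"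
    using calculation(2) by (simp add: mult_left_mono mult_right_mono)
  ultimately show ?thesis unfolding F2_Re
    by (smt (verit) zero_le_power2)
qed

lemma psd_entries: fixes M :: "complex^'n^'n" assumes "psd M" "i \<noteq> j"
  shows "Im (M$i$i) = 0" "Re (M$i$i) \<ge> 0" "M$j$i = cnj (M$i$j)"
    "(cmod (M$i$j))^2 \<le> Re (M$i$i) * Re (M$j$j)"
proof -
  have q: "\<And>x y. Im (qf M (v2 i j x y)) = 0 \<and> Re (qf M (v2 i j x y)) \<ge> 0"
    using assms(1) psd_qf by blast
  have d1: "Im (M$i$i) = 0 \<and> Re (M$i$i) \<ge> 0" using q[of 1 0] by (simp add: qf_v2[OF assms(2)])
  then show "Im (M$i$i) = 0" "Re (M$i$i) \<ge> 0" by auto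
  have d2: "Im (M$j$j) = 0 \<and> Re (M$j$j) \<ge> 0" using q[of 0 1] by (simp add: qf_v2[OF assms(2)])
  have h1: "Im (M$i$j + M$j$i) = 0" using q[of 1 1] d1 d2 by (simp add: qf_v2[OF assms(2)])
  have h2: "Re (M$i$j - M$j$i) = 0" using q[of 1 \<i>] d1 d2 by (simp add: qf_v2[OF assms(2)])
  show herm: "M$j$i = cnj (M$i$j)" using h1 h2 by (simp add: complex_eq_iff)
  have mi: "M$i$i = of_real (Re (M$i$i))" using d1 by (simp add: complex_eq_iff)
  have mj: "M$j$j = of_real (Re (M$j$j))" using d2 by (simp add: complex_eq_iff)
  have "\<forall>x y. Re (F2 (Re (M$i$i)) (Re (M$j$j)) (M$i$j) x y) \<ge> 0"
  proof (intro allI)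
    fix x y
    have "F2 (Re (M$i$i)) (Re (M$j$j)) (M$i$j) x y = qf M (v2 i j x y)"
      unfolding qf_v2[OF assms(2)] F2_def herm by (subst mi, subst mj) simp
    then show "Re (F2 (Re (M$i$i)) (Re (M$j$j)) (M$i$j) x y) \<ge> 0" using q by simp
  qed
  then show "(cmod (M$i$j))^2 \<le> Re (M$i$i) * Re (M$j$j)" by (rule H2c)
qed


definition Xm :: "real \<Rightarrow> real \<Rightarrow> real \<Rightarrow> real \<Rightarrow> complex \<Rightarrow> complex \<Rightarrow> qqmat" where
"Xm a b c d p q = (\<chi> r s.
   if r = s then of_real (if r = (0,0) then a else if r = (0,1) then b else if r = (1,0) then c else d)
   else if r = (0,0) \<and> s = (1,1) then p
   else if r = (1,1) \<and> s = (0,0) then cnj p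
   else if r = (0,1) \<and> s = (1,0) then q
   else if r = (1,0) \<and> s = (0,1) then cnj q else 0)"

lemma Xm_nth[simp]:
  "Xm a b c d p q $ (0,0) $ (0,0) = of_real a" "Xm a b c d p q $ (0,0) $ (0,1) = 0"
  "Xm a b c d p q $ (0,0) $ (1,0) = 0" "Xm a b c d p q $ (0,0) $ (1,1) = p"
  "Xm a b c d p q $ (0,1) $ (0,0) = 0" "Xm a b c d p q $ (0,1) $ (0,1) = of_real b"
  "Xm a b c d p q $ (0,1) $ (1,0) = q" "Xm a b c d p q $ (0,1) $ (1,1) = 0"
  "Xm a b c d p q $ (1,0) $ (0,0) = 0" "Xm a b c d p q $ (1,0) $ (0,1) = cnj q"
  "Xm a b c d p q $ (1,0) $ (1,0) = of_real c" "Xm a b c d p q $ (1,0) $ (1,1) = 0"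
  "Xm a b c d p q $ (1,1) $ (0,0) = cnj p" "Xm a b c d p q $ (1,1) $ (0,1) = 0"
  "Xm a b c d p q $ (1,1) $ (1,0) = 0" "Xm a b c d p q $ (1,1) $ (1,1) = of_real d"
  by (simp_all add: Xm_def)

lemma qq_eqI:
  fixes A B :: qqmat
  assumes "\<forall>r\<in>{(0,0),(0,1),(1,0),(1,1)}. \<forall>s\<in>{(0,0),(0,1),(1,0),(1,1)}. A$r$s = B$r$s"
  shows "A = B"
  using assms unfolding vec_eq_iff U22[symmetric] by blast

lemma Xm_diff: "Xm a b c d p q - Xm a' b' c' d' p' q' = Xm (a-a') (b-b') (c-c') (d-d') (p-p') (q-q')"
  by (rule qq_eqI) simp

lemma hs_Xm: "hs_norm2 (Xm a b c d p q) = a^2+b^2+c^2+d^2 + 2*(cmod p)^2 + 2*(cmod q)^2"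
  unfolding hs_norm2_def sum22 by simp

lemma trace_Xm: "trace (Xm a b c d p q) = of_real (a+b+c+d)"
  unfolding trace_def sum22 by simp

lemma qf_Xm: "qf (Xm a b c d p q) v = F2 a d p (v$(0,0)) (v$(1,1)) + F2 b c q (v$(0,1)) (v$(1,0))"
  unfolding qf_def sum22 F2_def by (simp add: algebra_simps)

lemma psd_Xm: assumes "a \<ge> 0" "b \<ge> 0" "c \<ge> 0" "d \<ge> 0" "(cmod p)^2 \<le> a*d" "(cmod q)^2 \<le> b*c"
  shows "psd (Xm a b c d p q)"
  unfolding psd_qf qf_Xm using H2[of a d p] H2[of b c q] F2_Im assms by simp

lemma X_state_Xm: assumes "a \<ge> 0" "b \<ge> 0" "c \<ge> 0" "d \<ge> 0" "(cmod p)^2 \<le> a*d" "(cmod q)^2 \<le> b*c"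
  "a+b+c+d = 1"
  shows "X_state (Xm a b c d p q)"
  unfolding X_state_def is_state_def
proof (intro conjI allI impI)
  show "psd (Xm a b c d p q)" using psd_Xm assms by simp
  show "trace (Xm a b c d p q) = 1" using assms by (simp add: trace_Xm)
  fix i j k l assume "Xm a b c d p q $ (i, j) $ (k, l) \<noteq> 0"
  then show "(k, l) = (i, j) \<or> (k, l) = (1 - i, 1 - j)"
    using two_cases[of i] two_cases[of j] two_cases[of k] two_cases[of l] by (elim disjE) (simp_all add: Xm_def)
qed


lemma X_state_form:
  assumes "X_state \<rho>"
  obtains a b c d p q where "\<rho> = Xm a b c d p q" "a \<ge> 0" "b \<ge> 0" "c \<ge> 0" "d \<ge> 0"
    "a+b+c+d = 1" "(cmod p)^2 \<le> a*d" "(cmod q)^2 \<le> b*c"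
proof -
  have ps: "psd \<rho>" and tr: "trace \<rho> = 1" and z: "\<And>i j k l. \<rho>$(i,j)$(k,l) \<noteq> 0 \<Longrightarrow> (k,l) = (i,j) \<or> (k,l) = (1-i,1-j)"
    using assms unfolding X_state_def is_state_def by blast+
  have n1: "((0::2),(0::2)) \<noteq> (1,1)" "((0::2),(1::2)) \<noteq> (1,0)" by simp_all
  note e1 = psd_entries[OF ps n1(1)] and e2 = psd_entries[OF ps n1(2)]
    and e3 = psd_entries[OF ps n1(1)[symmetric]] and e4 = psd_entries[OF ps n1(2)[symmetric]]
  define a where "a = Re (\<rho>$(0,0)$(0,0))"
  define b where "b = Re (\<rho>$(0,1)$(0,1))"
  define c where "c = Re (\<rho>$(1,0)$(1,0))"
  define d where "d = Re (\<rho>$(1,1)$(1,1))"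
  define p where "p = \<rho>$(0,0)$(1,1)"
  define q where "q = \<rho>$(0,1)$(1,0)"
  have zz: "\<rho>$(i,j)$(k,l) = 0" if "(k,l) \<noteq> (i,j)" "(k,l) \<noteq> (1-i,1-j)" for i j k l
    using z[of i j k l] that by blast
  have eq: "\<rho> = Xm a b c d p q"
  proof (rule qq_eqI)
    show "\<forall>r\<in>{(0,0),(0,1),(1,0),(1,1)}. \<forall>s\<in>{(0,0),(0,1),(1,0),(1,1)}. \<rho>$r$s = Xm a b c d p q$r$s"
      using e1 e2 e3 e4 zz[of 0 0 0 1] zz[of 0 0 1 0] zz[of 0 1 0 0] zz[of 0 1 1 1]
        zz[of 1 0 0 0] zz[of 1 0 1 1] zz[of 1 1 0 1] zz[of 1 1 1 0]
      by (simp add: a_def b_def c_def d_def p_def q_def complex_eq_iff)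
  qed
  have "a+b+c+d = 1" using tr unfolding eq trace_Xm by (metis of_real_eq_1_iff)
  moreover have "(cmod p)^2 \<le> a*d" "(cmod q)^2 \<le> b*c"
    using e1 e2 by (simp_all add: a_def b_def c_def d_def p_def q_def)
  moreover have "a \<ge> 0" "b \<ge> 0" "c \<ge> 0" "d \<ge> 0" using e1 e2 e3 e4
    by (simp_all add: a_def b_def c_def d_def)
  ultimately show ?thesis using that eq by blast
qed



lemma ppt_gen:
  assumes w: "\<forall>k<n. w k \<ge> 0" and h: "\<forall>k<n. P k \<ge> 0 \<and> R k \<ge> 0 \<and> (cmod (S k))^2 \<le> P k * R k"
    and P0: "P0 = (\<Sum>k<n. w k * P k)" and R0: "R0 = (\<Sum>k<n. w k * R k)"
    and S0: "S0 = (\<Sum>k<n. of_real (w k) * S k)"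
  shows "(cmod S0)^2 \<le> P0 * R0"
proof (rule H2c(3))
  show "\<forall>x y. Re (F2 P0 R0 S0 x y) \<ge> 0"
  proof (intro allI)
    fix x y
    have c: "cnj x * S0 * y = (\<Sum>k<n. of_real (w k) * (cnj x * S k * y))"
      by (simp add: S0 sum_distrib_left sum_distrib_right algebra_simps)
    have c2: "Re (cnj x * S0 * y) = (\<Sum>k<n. w k * Re (cnj x * S k * y))"
      unfolding c Re_sum by simp
    have "(\<Sum>k<n. w k * Re (F2 (P k) (R k) (S k) x y)) = (\<Sum>k<n. w k * P k) * (cmod x)^2 + (\<Sum>k<n. w k * R k) * (cmod y)^2
       + 2 * (\<Sum>k<n. w k * Re (cnj x * S k * y))"
    proof -
      have "(\<Sum>k<n. w k * Re (F2 (P k) (R k) (S k) x y)) = (\<Sum>k<n. (w k * P k) * (cmod x)^2 + (w k * R k) * (cmod y)^2 + 2 * (w k * Re (cnj x * S k * y)))"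
        by (rule sum.cong) (simp_all add: F2_Re algebra_simps)
      also have "\<dots> = (\<Sum>k<n. w k * P k) * (cmod x)^2 + (\<Sum>k<n. w k * R k) * (cmod y)^2
       + 2 * (\<Sum>k<n. w k * Re (cnj x * S k * y))"
        by (simp only: sum.distrib sum_distrib_right[symmetric] sum_distrib_left[symmetric])
      finally show ?thesis .
    qed
    then have "Re (F2 P0 R0 S0 x y) = (\<Sum>k<n. w k * Re (F2 (P k) (R k) (S k) x y))"
      unfolding F2_Re c2 P0 R0 by simp
    also have "\<dots> \<ge> 0" using w h H2 by (intro sum_nonneg) (simp add: mult_nonneg_nonneg)
    finally show "Re (F2 P0 R0 S0 x y) \<ge> 0" .
  qed
qed

lemma sep_entry: "(\<Sum>k<n. w k *\<^sub>R kron (A k) (B k)) $ r $ s = (\<Sum>k<n. of_real (w k) * (A k $ fst r $ fst s * B k $ snd r $ snd s))"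
  by (simp add: sum_component kron_def vector_scaleR_component) (simp add: scaleR_conv_of_real)

lemma state2: assumes "is_state (A::qmat)"
  shows "Im (A$0$0) = 0" "Im (A$1$1) = 0" "Re (A$0$0) \<ge> 0" "Re (A$1$1) \<ge> 0"
    "A$1$0 = cnj (A$0$1)" "(cmod (A$0$1))^2 \<le> Re (A$0$0) * Re (A$1$1)"
proof -
  have ps: "psd A" using assms is_state_def by blast
  have n: "(0::2) \<noteq> 1" by simp
  note e = psd_entries[OF ps n] and e' = psd_entries[OF ps n[symmetric]]
  from e(1,2,3) e'(1,2) show "Im (A$0$0) = 0" "Im (A$1$1) = 0" "Re (A$0$0) \<ge> 0" "Re (A$1$1) \<ge> 0"
    "A$1$0 = cnj (A$0$1)"
    by (simp_all add: complex_eq_iff)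
  show "(cmod (A$0$1))^2 \<le> Re (A$0$0) * Re (A$1$1)" by (rule e(4))
qed

lemma sep_ppt: assumes "separable (Xm a b c d p q)"
  shows "(cmod p)^2 \<le> b*c" "(cmod q)^2 \<le> a*d"
proof -
  obtain n :: nat and w A B where h: "\<forall>k<n. w k \<ge> 0 \<and> is_state (A k) \<and> is_state (B k)"
    and eq: "Xm a b c d p q = (\<Sum>k<n. w k *\<^sub>R kron (A k) (B k))"
    using assms unfolding separable_def by blast
  have ent: "\<And>r s. Xm a b c d p q $ r $ s = (\<Sum>k<n. of_real (w k) * (A k $ fst r $ fst s * B k $ snd r $ snd s))"
    unfolding eq sep_entry ..
  have A: "\<And>k. k < n \<Longrightarrow> Im (A k$0$0) = 0 \<and> Im (A k$1$1) = 0 \<and> Re (A k$0$0) \<ge> 0 \<and> Re (A k$1$1) \<ge> 0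
    \<and> A k$1$0 = cnj (A k$0$1) \<and> (cmod (A k$0$1))^2 \<le> Re (A k$0$0) * Re (A k$1$1)"
    using h state2 by blast
  have B: "\<And>k. k < n \<Longrightarrow> Im (B k$0$0) = 0 \<and> Im (B k$1$1) = 0 \<and> Re (B k$0$0) \<ge> 0 \<and> Re (B k$1$1) \<ge> 0
    \<and> B k$1$0 = cnj (B k$0$1) \<and> (cmod (B k$0$1))^2 \<le> Re (B k$0$0) * Re (B k$1$1)"
    using h state2 by blast
  show "(cmod p)^2 \<le> b*c"
  proof (rule ppt_gen[where w=w and n=n and P="\<lambda>k. Re (A k$0$0) * Re (B k$1$1)" and R="\<lambda>k. Re (A k$1$1) * Re (B k$0$0)"
        and S="\<lambda>k. A k$0$1 * B k$0$1"])
    show "\<forall>k<n. w k \<ge> 0" using h by blast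
    show "\<forall>k<n. Re (A k$0$0) * Re (B k$1$1) \<ge> 0 \<and> Re (A k$1$1) * Re (B k$0$0) \<ge> 0 \<and>
      (cmod (A k$0$1 * B k$0$1))^2 \<le> Re (A k$0$0) * Re (B k$1$1) * (Re (A k$1$1) * Re (B k$0$0))"
    proof (intro allI impI conjI)
      fix k assume k: "k < n"
      note Ak = A[OF k] and Bk = B[OF k]
      show "Re (A k$0$0) * Re (B k$1$1) \<ge> 0" "Re (A k$1$1) * Re (B k$0$0) \<ge> 0" using Ak Bk by simp_all
      have "(cmod (A k$0$1 * B k$0$1))^2 = (cmod (A k$0$1))^2 * (cmod (B k$0$1))^2" by (simp add: norm_mult power_mult_distrib)
      also have "\<dots> \<le> (Re (A k$0$0) * Re (A k$1$1)) * (Re (B k$0$0) * Re (B k$1$1))"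
        using Ak Bk by (intro mult_mono) (simp_all add: mult_nonneg_nonneg)
      finally show "(cmod (A k$0$1 * B k$0$1))^2 \<le> Re (A k$0$0) * Re (B k$1$1) * (Re (A k$1$1) * Re (B k$0$0))"
        by (simp add: algebra_simps)
    qed
    have "of_real b = (\<Sum>k<n. of_real (w k) * (A k $ 0 $ 0 * B k $ 1 $ 1))" using ent[of "(0,1)" "(0,1)"] by simp
    also have "\<dots> = of_real (\<Sum>k<n. w k * (Re (A k$0$0) * Re (B k$1$1)))"
      by (simp add: of_real_sum) (rule sum.cong, simp, use A B in \<open>simp add: complex_eq_iff\<close>)
    finally show "b = (\<Sum>k<n. w k * (Re (A k$0$0) * Re (B k$1$1)))" using of_real_eq_iff by blast
    have "of_real c = (\<Sum>k<n. of_real (w k) * (A k $ 1 $ 1 * B k $ 0 $ 0))" using ent[of "(1,0)" "(1,0)"] by simp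
    also have "\<dots> = of_real (\<Sum>k<n. w k * (Re (A k$1$1) * Re (B k$0$0)))"
      by (simp add: of_real_sum) (rule sum.cong, simp, use A B in \<open>simp add: complex_eq_iff\<close>)
    finally show "c = (\<Sum>k<n. w k * (Re (A k$1$1) * Re (B k$0$0)))" using of_real_eq_iff by blast
    show "p = (\<Sum>k<n. of_real (w k) * (A k$0$1 * B k$0$1))" using ent[of "(0,0)" "(1,1)"] by simp
  qed
  show "(cmod q)^2 \<le> a*d"
  proof (rule ppt_gen[where w=w and n=n and P="\<lambda>k. Re (A k$0$0) * Re (B k$0$0)" and R="\<lambda>k. Re (A k$1$1) * Re (B k$1$1)"
        and S="\<lambda>k. A k$0$1 * B k$1$0"])
    show "\<forall>k<n. w k \<ge> 0" using h by blast
    show "\<forall>k<n. Re (A k$0$0) * Re (B k$0$0) \<ge> 0 \<and> Re (A k$1$1) * Re (B k$1$1) \<ge> 0 \<and>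
      (cmod (A k$0$1 * B k$1$0))^2 \<le> Re (A k$0$0) * Re (B k$0$0) * (Re (A k$1$1) * Re (B k$1$1))"
    proof (intro allI impI conjI)
      fix k assume k: "k < n"
      note Ak = A[OF k] and Bk = B[OF k]
      show "Re (A k$0$0) * Re (B k$0$0) \<ge> 0" "Re (A k$1$1) * Re (B k$1$1) \<ge> 0" using Ak Bk by simp_all
      have "(cmod (A k$0$1 * B k$1$0))^2 = (cmod (A k$0$1))^2 * (cmod (B k$0$1))^2" using Bk by (simp add: norm_mult power_mult_distrib)
      also have "\<dots> \<le> (Re (A k$0$0) * Re (A k$1$1)) * (Re (B k$0$0) * Re (B k$1$1))"
        using Ak Bk by (intro mult_mono) (simp_all add: mult_nonneg_nonneg)
      finally show "(cmod (A k$0$1 * B k$1$0))^2 \<le> Re (A k$0$0) * Re (B k$0$0) * (Re (A k$1$1) * Re (B k$1$1))"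
        by (simp add: algebra_simps)
    qed
    have "of_real a = (\<Sum>k<n. of_real (w k) * (A k $ 0 $ 0 * B k $ 0 $ 0))" using ent[of "(0,0)" "(0,0)"] by simp
    also have "\<dots> = of_real (\<Sum>k<n. w k * (Re (A k$0$0) * Re (B k$0$0)))"
      by (simp add: of_real_sum) (rule sum.cong, simp, use A B in \<open>simp add: complex_eq_iff\<close>)
    finally show "a = (\<Sum>k<n. w k * (Re (A k$0$0) * Re (B k$0$0)))" using of_real_eq_iff by blast
    have "of_real d = (\<Sum>k<n. of_real (w k) * (A k $ 1 $ 1 * B k $ 1 $ 1))" using ent[of "(1,1)" "(1,1)"] by simp
    also have "\<dots> = of_real (\<Sum>k<n. w k * (Re (A k$1$1) * Re (B k$1$1)))"
      by (simp add: of_real_sum) (rule sum.cong, simp, use A B in \<open>simp add: complex_eq_iff\<close>)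
    finally show "d = (\<Sum>k<n. w k * (Re (A k$1$1) * Re (B k$1$1)))" using of_real_eq_iff by blast
    show "q = (\<Sum>k<n. of_real (w k) * (A k$0$1 * B k$1$0))" using ent[of "(0,1)" "(1,0)"] by simp
  qed
qed



lemma zlem:
  fixes a b c d m :: real
  assumes nn: "a \<ge> 0" "b \<ge> 0" "c \<ge> 0" "d \<ge> 0" and s1: "a+b+c+d = 1"
    and m1: "m \<le> a*d" and m2: "m \<le> b*c" and m3: "32*m \<ge> 1"
  shows "2*(a-c)^2 + 2*(b-d)^2 + 16*m \<le> 1"
    and "2*(a-c)^2 + 2*(b-d)^2 + 16*m = 1 \<Longrightarrow> a*d = m \<and> b*c = m"
proof -
  define u where "u = a+d"
  define v where "v = b+c"
  define \<alpha> where "\<alpha> = a-d"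
  define \<beta> where "\<beta> = b-c"
  define A where "A = u^2 - 4*m"
  define B where "B = v^2 - 4*m"
  define R where "R = 2* u* v - (u-v)^2 - 8*m"
  have uv: "u + v = 1" using s1 by (simp add: u_def v_def)
  have u0: "u \<ge> 0" "v \<ge> 0" using nn by (simp_all add: u_def v_def)
  have ad: "4*(a*d) = u^2 - \<alpha>^2" "4*(b*c) = v^2 - \<beta>^2"
    by (simp_all add: u_def v_def \<alpha>_def \<beta>_def power2_eq_square algebra_simps)
  have aA: "\<alpha>^2 \<le> A" using ad m1 by (simp add: A_def)
  have bB: "\<beta>^2 \<le> B" using ad m2 by (simp add: B_def)
  have A0: "A \<ge> 0" using aA by (meson order_trans zero_le_power2)
  have B0: "B \<ge> 0" using bB by (meson order_trans zero_le_power2)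
  have uu: "1 \<le> 8* u^2" "1 \<le> 8* v^2" using A0 B0 m3 by (simp_all add: A_def B_def)
  have v3u: "v \<le> 3* u"
  proof (rule ccontr)
    assume "\<not> v \<le> 3* u"
    then have "v > 3* u" by simp
    then have "u < 1/4" using uv by simp
    then have "u * u \<le> u * (1/4)" using u0 by (intro mult_left_mono) auto
    then have "u^2 < 1/16" using \<open>u < 1/4\<close> by (simp add: power2_eq_square)
    then show False using uu by simp
  qed
  have u3v: "u \<le> 3* v"
  proof (rule ccontr)
    assume "\<not> u \<le> 3* v"
    then have "u > 3* v" by simp
    then have "v < 1/4" using uv by simp
    then have "v * v \<le> v * (1/4)" using u0 by (intro mult_left_mono) auto
    then have "v^2 < 1/16" using \<open>v < 1/4\<close> by (simp add: power2_eq_square)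
    then show False using uu by simp
  qed
  have R0: "R \<ge> 0"
  proof (cases "u \<le> v")
    case True
    have "8*m \<le> 2* u^2" using A0 by (simp add: A_def)
    then have "R \<ge> 2* u* v - (u-v)^2 - 2* u^2" by (simp add: R_def)
    moreover have "2* u* v - (u-v)^2 - 2* u^2 = (v-u)*(3* u-v)" by (simp add: power2_eq_square algebra_simps)
    moreover have "(v-u)*(3* u-v) \<ge> 0" using True v3u by simp
    ultimately show ?thesis by linarith
  next
    case False
    have "8*m \<le> 2* v^2" using B0 by (simp add: B_def)
    then have "R \<ge> 2* u* v - (u-v)^2 - 2* v^2" by (simp add: R_def)
    moreover have "2* u* v - (u-v)^2 - 2* v^2 = (u-v)*(3* v-u)" by (simp add: power2_eq_square algebra_simps)
    moreover have "(u-v)*(3* v-u) \<ge> 0" using False u3v by simp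
    ultimately show ?thesis by linarith
  qed
  have vv: "v = 1 - u" using uv by simp
  have RAB: "R^2 - 4*A*B = (2* u-1)^2 * (32*m - 1 + 2*(2* u-1)^2)"
    unfolding R_def A_def B_def vv by (simp add: power2_eq_square algebra_simps)
  have RAB2: "4*A*B \<le> R^2"
  proof -
    have "(2* u-1)^2 * (32*m - 1 + 2*(2* u-1)^2) \<ge> 0" using m3 by simp
    then show ?thesis using RAB by linarith
  qed
  have ab: "2*\<bar>\<alpha>\<bar>*\<bar>\<beta>\<bar> \<le> R"
  proof -
    have "(2*\<bar>\<alpha>\<bar>*\<bar>\<beta>\<bar>)^2 = 4*\<alpha>^2*\<beta>^2" by (simp add: power_mult_distrib)
    also have "\<dots> \<le> 4*A*B" using mult_mono[OF aA bB A0 zero_le_power2] by simp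
    also have "\<dots> \<le> R^2" by (rule RAB2)
    finally show ?thesis using R0 by (meson abs_ge_zero power2_le_imp_le)
  qed
  have sq: "(\<alpha>+\<beta>)^2 \<le> \<alpha>^2 + \<beta>^2 + 2*\<bar>\<alpha>\<bar>*\<bar>\<beta>\<bar>"
  proof -
    have "\<alpha>*\<beta> \<le> \<bar>\<alpha>\<bar>*\<bar>\<beta>\<bar>" by (metis abs_ge_self abs_mult)
    then show ?thesis by (simp add: power2_eq_square algebra_simps)
  qed
  have zz: "2*(a-c)^2 + 2*(b-d)^2 = (\<alpha>+\<beta>)^2 + (u-v)^2"
    by (simp add: \<alpha>_def \<beta>_def u_def v_def power2_eq_square algebra_simps)
  have tot: "A + B + R = 1 - (u-v)^2 - 16*m"
    unfolding A_def B_def R_def vv by (simp add: power2_eq_square algebra_simps)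
  show "2*(a-c)^2 + 2*(b-d)^2 + 16*m \<le> 1"
    using zz sq ab aA bB tot by linarith
  assume eq: "2*(a-c)^2 + 2*(b-d)^2 + 16*m = 1"
  have "\<alpha>^2 = A" "\<beta>^2 = B" using zz sq ab aA bB tot eq by linarith+
  then show "a*d = m \<and> b*c = m" using ad by (simp add: A_def B_def)
qed


lemma key_ord:
  fixes a b c d s t :: real
  assumes nn: "a \<ge> 0" "b \<ge> 0" "c \<ge> 0" "d \<ge> 0" and s1: "a+b+c+d = 1"
    and st: "0 \<le> t" "t \<le> s" and h1: "s^2 \<le> a*d" "s^2 \<le> b*c" and big: "8*(s^2+t^2) \<ge> 1/2"
  shows "4*(s-t)^2 + (2*(a-c)^2 + 2*(b-d)^2) \<le> 1/2"
    and "4*(s-t)^2 + (2*(a-c)^2 + 2*(b-d)^2) \<ge> 1/2 \<Longrightarrow> s = t \<and> a*d = s^2 \<and> b*c = s^2"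
proof -
  have "t^2 \<le> s^2" using st by (simp add: power_mono)
  then have m3: "32* s^2 \<ge> 1" using big by simp
  note z = zlem[OF nn s1 h1 m3]
  have f: "4* s^2 + 8* s* t - 12* t^2 = 4*(s-t)*(s+3* t)" by (simp add: algebra_simps power2_eq_square)
  have f0: "4*(s-t)*(s+3* t) \<ge> 0" using st by simp
  have g: "4*(s-t)^2 + 8*(s^2+t^2) = 16* s^2 - (4* s^2 + 8* s* t - 12* t^2)" by (simp add: algebra_simps power2_eq_square)
  show "4*(s-t)^2 + (2*(a-c)^2 + 2*(b-d)^2) \<le> 1/2" using z(1) f f0 g big by linarith
  assume ge: "4*(s-t)^2 + (2*(a-c)^2 + 2*(b-d)^2) \<ge> 1/2"
  have e1: "2*(a-c)^2 + 2*(b-d)^2 + 16* s^2 = 1" using z(1) f f0 g big ge by linarith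
  have e2: "4*(s-t)*(s+3* t) = 0" using z(1) f f0 g big ge by linarith
  have "s \<noteq> 0" using m3 by auto
  then have "s > 0" using st by simp
  then have "s = t" using e2 st by simp
  then show "s = t \<and> a*d = s^2 \<and> b*c = s^2" using z(2)[OF e1] by simp
qed

lemma key:
  fixes a b c d s t :: real
  assumes nn: "a \<ge> 0" "b \<ge> 0" "c \<ge> 0" "d \<ge> 0" and s1: "a+b+c+d = 1"
    and st: "0 \<le> s" "0 \<le> t" and h: "s^2 \<le> a*d" "s^2 \<le> b*c" "t^2 \<le> a*d" "t^2 \<le> b*c"
  shows "min (8*(s^2+t^2)) (4*(s-t)^2 + (2*(a-c)^2 + 2*(b-d)^2)) \<le> 1/2"
    and "8*(s^2+t^2) \<ge> 1/2 \<Longrightarrow> 4*(s-t)^2 + (2*(a-c)^2 + 2*(b-d)^2) \<ge> 1/2 \<Longrightarrow> s = t \<and> a*d = s^2 \<and> b*c = s^2"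
proof -
  have sym: "(s-t)^2 = (t-s)^2" "s^2+t^2 = t^2+s^2" by (simp_all add: power2_commute)
  show "min (8*(s^2+t^2)) (4*(s-t)^2 + (2*(a-c)^2 + 2*(b-d)^2)) \<le> 1/2"
  proof (cases "8*(s^2+t^2) \<ge> 1/2")
    case False
    have "min (8*(s^2+t^2)) (4*(s-t)^2 + (2*(a-c)^2 + 2*(b-d)^2)) \<le> 8*(s^2+t^2)" by (rule min.cobounded1)
    then show ?thesis using False by linarith
  next
    case True
    show ?thesis
    proof (cases "t \<le> s")
      case True2: True
      have "min (8*(s^2+t^2)) (4*(s-t)^2 + (2*(a-c)^2 + 2*(b-d)^2)) \<le> 4*(s-t)^2 + (2*(a-c)^2 + 2*(b-d)^2)" by (rule min.cobounded2)
      then show ?thesis using key_ord(1)[OF nn s1 st(2) True2 h(1,2) True] by linarith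
    next
      case False
      then have "s \<le> t" by simp
      have "min (8*(s^2+t^2)) (4*(s-t)^2 + (2*(a-c)^2 + 2*(b-d)^2)) \<le> 4*(s-t)^2 + (2*(a-c)^2 + 2*(b-d)^2)" by (rule min.cobounded2)
      moreover have "8*(t^2+s^2) \<ge> 1/2" using True sym by simp
      ultimately show ?thesis using key_ord(1)[OF nn s1 st(1) \<open>s \<le> t\<close> h(3,4)] sym by linarith
    qed
  qed
  assume b1: "8*(s^2+t^2) \<ge> 1/2" and b2: "4*(s-t)^2 + (2*(a-c)^2 + 2*(b-d)^2) \<ge> 1/2"
  show "s = t \<and> a*d = s^2 \<and> b*c = s^2"
  proof (cases "t \<le> s")
    case True
    show ?thesis using key_ord(2)[OF nn s1 st(2) True h(1,2) b1 b2] .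
  next
    case False
    then have "s \<le> t" by simp
    from key_ord(2)[OF nn s1 st(1) this h(3,4)] b1 b2 sym show ?thesis by auto
  qed
qed



definition M2 :: "real \<Rightarrow> real \<Rightarrow> complex \<Rightarrow> qmat" where
  "M2 P R S = (\<chi> i j. if i = 0 then (if j = 0 then of_real P else S) else (if j = 0 then cnj S else of_real R))"

lemma M2_nth[simp]: "M2 P R S $ 0 $ 0 = of_real P" "M2 P R S $ 0 $ 1 = S" "M2 P R S $ 1 $ 0 = cnj S" "M2 P R S $ 1 $ 1 = of_real R"
  by (simp_all add: M2_def)

lemma qf2: "qf (A::qmat) v = cnj(v$0)*A$0$0* v$0 + cnj(v$0)*A$0$1* v$1 + cnj(v$1)*A$1$0* v$0 + cnj(v$1)*A$1$1* v$1"
  by (simp add: qf_def sum2 algebra_simps)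

lemma state_M2: assumes "P \<ge> 0" "R \<ge> 0" "P + R = 1" "(cmod S)^2 \<le> P*R"
  shows "is_state (M2 P R S)"
  unfolding is_state_def psd_qf
proof (intro conjI allI)
  fix v :: "complex^2"
  have "qf (M2 P R S) v = F2 P R S (v$0) (v$1)" by (simp add: qf2 F2_def)
  then show "Im (qf (M2 P R S) v) = 0" "Re (qf (M2 P R S) v) \<ge> 0" using F2_Im H2 assms by simp_all
next
  show "trace (M2 P R S) = 1" using assms(3) unfolding trace_def sum2 by (metis M2_nth(1,4) of_real_1 of_real_add)
qed

lemma sumk_entry: "(\<Sum>k\<in>(UNIV::2 set). p k *\<^sub>R kron (A k) (B k)) $ r $ s = (\<Sum>k\<in>UNIV. of_real (p k) * (A k $ fst r $ fst s * B k $ snd r $ snd s))"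
  by (simp add: sum_component kron_def vector_scaleR_component) (simp add: scaleR_conv_of_real)

lemma Omega0_I: fixes \<psi> :: "2 \<Rightarrow> complex^2" and p :: "2 \<Rightarrow> real" and \<sigma> :: "2 \<Rightarrow> qmat"
  assumes "\<forall>k l. cinner (\<psi> k) (\<psi> l) = (if k=l then 1 else 0)" "\<forall>k. p k \<ge> 0 \<and> is_state (\<sigma> k)" "sum p UNIV = 1"
  shows "(\<Sum>k\<in>UNIV. p k *\<^sub>R kron (ket_bra (\<psi> k)) (\<sigma> k)) \<in> Omega0"
  unfolding Omega0_def mem_Collect_eq
  by (intro exI[of _ \<psi>] exI[of _ p] exI[of _ \<sigma>]) (use assms in auto)

lemma hs_nonneg: "hs_norm2 X \<ge> 0" unfolding hs_norm2_def by (intro sum_nonneg) simp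

lemma gd_le: assumes "X \<in> Omega0" shows "geometric_discord \<rho> \<le> 2 * hs_norm2 (\<rho> - X)"
proof -
  have "Inf ((\<lambda>X. hs_norm2 (\<rho> - X)) ` Omega0) \<le> hs_norm2 (\<rho> - X)"
    by (rule cInf_lower) (use assms hs_nonneg in \<open>auto intro!: bdd_belowI[where m=0]\<close>)
  then show ?thesis unfolding geometric_discord_def by simp
qed

definition ez :: "2 \<Rightarrow> complex^2" where "ez k = (\<chi> i. if i = k then 1 else 0)"
definition sg :: "real \<Rightarrow> real \<Rightarrow> qmat" where
  "sg x y = (if x + y = 0 then M2 1 0 0 else M2 (x/(x+y)) (y/(x+y)) 0)"

lemma sg_state: assumes "x \<ge> 0" "y \<ge> 0" shows "is_state (sg x y)"
  unfolding sg_def using assms by (auto intro!: state_M2 simp: field_simps add_nonneg_eq_0_iff)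

lemma sg_scale: assumes "x \<ge> 0" "y \<ge> 0"
  shows "of_real (x+y) * (sg x y $ i $ j) = M2 x y 0 $ i $ j"
  using two_cases[of i] two_cases[of j] assms
  by (auto simp: sg_def add_nonneg_eq_0_iff field_simps simp flip: of_real_mult of_real_add)

lemma sg_nth: assumes "x \<ge> 0" "y \<ge> 0"
  shows "(of_real x + of_real y) * sg x y $ 0 $ 0 = of_real x" "(of_real x + of_real y) * sg x y $ 1 $ 1 = of_real y"
    "sg x y $ 0 $ 1 = 0" "sg x y $ 1 $ 0 = 0"
  using sg_scale[OF assms, of 0 0] sg_scale[OF assms, of 1 1] by (simp_all add: sg_def)

lemma ez_nth[simp]: "ez 0 $ 0 = 1" "ez 0 $ 1 = 0" "ez 1 $ 0 = 0" "ez 1 $ 1 = 1" by (simp_all add: ez_def)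
lemma ket_bra_nth: "ket_bra v $ i $ j = v$i * cnj (v$j)" by (simp add: ket_bra_def)

lemma ez_orth: "\<forall>k l. cinner (ez k) (ez l) = (if k=l then 1 else 0)"
  unfolding cinner_def ez_def by (simp add: sum2) (metis two_cases)

lemma chiz: assumes "a \<ge> 0" "b \<ge> 0" "c \<ge> 0" "d \<ge> 0"
  shows "(\<Sum>k\<in>UNIV. (if k=0 then a+b else c+d) *\<^sub>R kron (ket_bra (ez k)) (if k = 0 then sg a b else sg c d)) = Xm a b c d 0 0"
proof (rule qq_eqI)
  note s1 = sg_nth[OF assms(1,2)] and s2 = sg_nth[OF assms(3,4)]
  show "\<forall>r\<in>{(0,0),(0,1),(1,0),(1,1)}. \<forall>s\<in>{(0,0),(0,1),(1,0),(1,1)}. (\<Sum>k\<in>UNIV. (if k=0 then a+b else c+d) *\<^sub>R kron (ket_bra (ez k)) (if k = 0 then sg a b else sg c d)) $ r $ s = Xm a b c d 0 0 $ r $ s"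
    unfolding sumk_entry unfolding sum2 by (simp add: ket_bra_nth s1 s2 mult.assoc[symmetric] mult.commute[of _ "ket_bra _ $ _ $ _"])
qed


definition hh :: complex where "hh = of_real (sqrt (1/2))"
lemma hh: "cnj hh = hh" "hh * hh = 1/2" "hh * (hh * x) = x/2"
  by (simp_all add: hh_def mult.assoc[symmetric] flip: of_real_mult)

definition ee :: "complex \<Rightarrow> 2 \<Rightarrow> complex^2" where
  "ee e k = (\<chi> i. if i = 0 then hh else (if k = 0 then hh * e else - hh * e))"
lemma ee_nth[simp]: "ee e k $ 0 = hh" "ee e 0 $ 1 = hh * e" "ee e 1 $ 1 = - hh * e"
  by (simp_all add: ee_def)

lemma ee_orth: assumes "cnj e * e = 1" shows "\<forall>k l. cinner (ee e k) (ee e l) = (if k=l then 1 else 0)"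
proof (intro allI)
  fix k l :: 2
  have h2: "e * cnj e = 1" "e * (cnj e * x) = x" for x using assms by (simp_all add: mult.commute mult.assoc[symmetric])
  show "cinner (ee e k) (ee e l) = (if k=l then 1 else 0)"
    using two_cases[of k] two_cases[of l] unfolding cinner_def sum2
    by (elim disjE) (simp_all add: hh algebra_simps h2)
qed

definition sige :: "real \<Rightarrow> real \<Rightarrow> real \<Rightarrow> real \<Rightarrow> complex \<Rightarrow> complex \<Rightarrow> complex \<Rightarrow> 2 \<Rightarrow> qmat" where
  "sige a b c d p q e k = M2 (a+c) (b+d) (if k = 0 then e*p + cnj e * cnj q else - (e*p + cnj e * cnj q))"

lemma chie: assumes "cnj e * e = 1"
  shows "(\<Sum>k\<in>UNIV. (1/2) *\<^sub>R kron (ket_bra (ee e k)) (sige a b c d p q e k))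
     = Xm ((a+c)/2) ((b+d)/2) ((a+c)/2) ((b+d)/2) ((p + cnj e^2 * cnj q)/2) ((q + cnj e^2 * cnj p)/2)"
proof (rule qq_eqI)
  have h2: "e * cnj e = 1" "e * (cnj e * x) = x" for x using assms by (simp_all add: mult.commute mult.assoc[symmetric])
  show "\<forall>r\<in>{(0,0),(0,1),(1,0),(1,1)}. \<forall>s\<in>{(0,0),(0,1),(1,0),(1,1)}. (\<Sum>k\<in>UNIV. (1/2) *\<^sub>R kron (ket_bra (ee e k)) (sige a b c d p q e k)) $ r $ s = Xm ((a+c)/2) ((b+d)/2) ((a+c)/2) ((b+d)/2) ((p + cnj e^2 * cnj q)/2) ((q + cnj e^2 * cnj p)/2) $ r $ s"
    unfolding sumk_entry unfolding sum2
    apply (simp add: ket_bra_nth sige_def hh algebra_simps h2 power2_eq_square)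
    apply (simp add: field_simps)
    done
qed


lemma choose_e: "\<exists>e. cnj e * e = 1 \<and> cmod (p - cnj e ^ 2 * cnj q) = \<bar>cmod p - cmod q\<bar>"
proof (cases "p = 0 \<or> q = 0")
  case True
  then show ?thesis by (intro exI[of _ 1]) auto
next
  case False
  then have p0: "p \<noteq> 0" and q0: "q \<noteq> 0" by auto
  define w where "w = sgn p * sgn q"
  define e where "e = cnj (csqrt w)"
  have w1: "cmod w = 1" using p0 q0 by (simp add: w_def norm_mult norm_sgn)
  have e2: "cnj e ^ 2 = w" by (simp add: e_def)
  have e1: "cnj e * e = 1"
  proof -
    have "cnj e * e = of_real ((cmod (cnj e))^2)" using complex_norm_square[of "cnj e"] by simp
    also have "\<dots> = 1" using w1 by (simp add: e_def)
    finally show ?thesis .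
  qed
  have sq: "sgn q * cnj q = of_real (cmod q)"
  proof -
    have n: "q * cnj q = of_real ((cmod q)^2)" by (rule complex_norm_square[symmetric])
    have "sgn q * cnj q = (q * cnj q) / of_real (cmod q)" by (simp add: sgn_eq)
    also have "\<dots> = of_real ((cmod q)^2) / of_real (cmod q)" by (simp only: n)
    also have "\<dots> = of_real (cmod q)" using q0 by (simp add: power2_eq_square)
    finally show ?thesis .
  qed
  have "p - w * cnj q = sgn p * of_real (cmod p - cmod q)"
  proof -
    have "p = sgn p * of_real (cmod p)" using p0 by (simp add: sgn_eq)
    moreover have "w * cnj q = sgn p * of_real (cmod q)" using sq by (simp add: w_def mult.assoc)
    ultimately show ?thesis by (simp add: algebra_simps)
  qed
  then have "cmod (p - w * cnj q) = cmod (sgn p) * cmod (of_real (cmod p - cmod q) :: complex)" by (simp only: norm_mult)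
  then have "cmod (p - w * cnj q) = \<bar>cmod p - cmod q\<bar>" using p0 by (simp only: norm_of_real norm_sgn) simp
  then show ?thesis using e1 e2 by blast
qed

lemma st_bound:
  fixes a b c d s t :: real
  assumes "a \<ge> 0" "b \<ge> 0" "c \<ge> 0" "d \<ge> 0" "s \<ge> 0" "t \<ge> 0" "s^2 \<le> a*d" "t^2 \<le> b*c"
  shows "(s+t)^2 \<le> (a+c)*(b+d)"
proof -
  have "(2 * s * t)^2 \<le> (a*b+c*d)^2"
  proof -
    have "(2 * s * t)^2 = 4 * (s^2 * t^2)" by (simp add: power_mult_distrib)
    also have "\<dots> \<le> 4*((a*d)*(b*c))" using mult_mono[OF assms(7,8)] assms(1-4) by simp
    also have "\<dots> = (a*b+c*d)^2 - (a*b-c*d)^2" by (simp add: power2_eq_square algebra_simps)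
    also have "\<dots> \<le> (a*b+c*d)^2" by simp
    finally show ?thesis .
  qed
  moreover have "0 \<le> a*b+c*d" using assms(1-4) by simp
  ultimately have "2 * s * t \<le> a*b+c*d" by (rule power2_le_imp_le)
  moreover have "(s+t)^2 = s^2 + t^2 + 2 * s * t" by (simp add: power2_eq_square algebra_simps)
  moreover have "(a+c)*(b+d) = a*d + b*c + (a*b + c*d)" by (simp add: algebra_simps)
  ultimately show ?thesis using assms(7,8) by linarith
qed
lemma ub_X:
  assumes nn: "a \<ge> 0" "b \<ge> 0" "c \<ge> 0" "d \<ge> 0" and s1: "a+b+c+d = 1"
    and h: "(cmod p)^2 \<le> a*d" "(cmod q)^2 \<le> b*c"
  shows "geometric_discord (Xm a b c d p q) \<le> 4*((cmod p)^2 + (cmod q)^2)"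
    and "geometric_discord (Xm a b c d p q) \<le> 2*(cmod p - cmod q)^2 + ((a-c)^2 + (b-d)^2)"
proof -
  let ?pz = "\<lambda>k::2. if k=0 then a+b else c+d"
  let ?sz = "\<lambda>k::2. if k=0 then sg a b else sg c d"
  have "(\<Sum>k\<in>UNIV. ?pz k *\<^sub>R kron (ket_bra (ez k)) (?sz k)) \<in> Omega0"
  proof (rule Omega0_I)
    show "\<forall>k l. cinner (ez k) (ez l) = (if k=l then 1 else 0)" by (rule ez_orth)
    have "a + b \<ge> 0" "c + d \<ge> 0" using nn by linarith+
    then show "\<forall>k. ?pz k \<ge> 0 \<and> is_state (?sz k)" using sg_state[OF nn(1,2)] sg_state[OF nn(3,4)] by simp
    show "sum ?pz UNIV = 1" unfolding sum2 using s1 by simp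
  qed
  then have "geometric_discord (Xm a b c d p q) \<le> 2 * hs_norm2 (Xm a b c d p q - Xm a b c d 0 0)"
    unfolding chiz[OF nn] by (rule gd_le)
  then show "geometric_discord (Xm a b c d p q) \<le> 4*((cmod p)^2 + (cmod q)^2)"
    by (simp add: Xm_diff hs_Xm)
  obtain e where e1: "cnj e * e = 1" and e2: "cmod (p - cnj e ^ 2 * cnj q) = \<bar>cmod p - cmod q\<bar>"
    using choose_e by blast
  have "(\<Sum>k\<in>UNIV. (1/2) *\<^sub>R kron (ket_bra (ee e k)) (sige a b c d p q e k)) \<in> Omega0"
  proof (rule Omega0_I)
    show "\<forall>k l. cinner (ee e k) (ee e l) = (if k=l then 1 else 0)" by (rule ee_orth[OF e1])
    have ce: "cmod e = 1"
    proof -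
      have "of_real ((cmod e)^2) = (1::complex)" using e1 complex_norm_square[of e] by (metis mult.commute)
      then have "(cmod e)^2 = 1" using of_real_eq_1_iff by blast
      then show ?thesis using norm_ge_zero[of e] by (auto simp add: power2_eq_1_iff)
    qed
    have t1: "cmod (e*p + cnj e * cnj q) \<le> cmod p + cmod q"
      using norm_triangle_ineq[of "e*p" "cnj e * cnj q"] ce by (simp add: norm_mult)
    have t2: "(cmod p + cmod q)^2 \<le> (a+c)*(b+d)"
      by (rule st_bound[OF nn norm_ge_zero norm_ge_zero h])
    have "(cmod (e*p + cnj e * cnj q))^2 \<le> (cmod p + cmod q)^2"
      by (rule power_mono[OF t1 norm_ge_zero])
    then have S: "(cmod (e*p + cnj e * cnj q))^2 \<le> (a+c)*(b+d)" using t2 by (rule order_trans)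
    have m: "- (e*p) - cnj e * cnj q = - (e*p + cnj e * cnj q)" by simp
    have S': "(cmod (- (e*p) - cnj e * cnj q))^2 \<le> (a+c)*(b+d)"
      unfolding m norm_minus_cancel by (rule S)
    have P: "a + c \<ge> 0" "b + d \<ge> 0" "(a+c) + (b+d) = 1" using nn s1 by linarith+
    have st1: "is_state (M2 (a+c) (b+d) (e*p + cnj e * cnj q))" by (rule state_M2[OF P S])
    have st2: "is_state (M2 (a+c) (b+d) (- (e*p) - cnj e * cnj q))" by (rule state_M2[OF P S'])
    show "\<forall>k. (1/2::real) \<ge> 0 \<and> is_state (sige a b c d p q e k)"
      unfolding sige_def using st1 st2 by simp
    show "sum (\<lambda>k. 1/2::real) (UNIV::2 set) = 1" by (simp add: sum2)
  qed
  then have "geometric_discord (Xm a b c d p q) \<le> 2 * hs_norm2 (Xm a b c d p q -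
     Xm ((a+c)/2) ((b+d)/2) ((a+c)/2) ((b+d)/2) ((p + cnj e^2 * cnj q)/2) ((q + cnj e^2 * cnj p)/2))"
    unfolding chie[OF e1] by (rule gd_le)
  also have "\<dots> = 2*(cmod p - cmod q)^2 + ((a-c)^2 + (b-d)^2)"
  proof -
    let ?w = "cnj e ^ 2"
    have ce: "cmod e = 1"
    proof -
      have "of_real ((cmod e)^2) = (1::complex)" using e1 complex_norm_square[of e] by (metis mult.commute)
      then have "(cmod e)^2 = 1" using of_real_eq_1_iff by blast
      then show ?thesis using norm_ge_zero[of e] by (auto simp add: power2_eq_1_iff)
    qed
    have w1: "cmod ?w = 1" using ce by (simp add: norm_power)
    have "cmod (q - ?w * cnj p) = cmod (p - ?w * cnj q)"
    proof -
      have cw: "cnj ?w * ?w = 1"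
      proof -
        have "?w * cnj ?w = of_real ((cmod ?w)^2)" by (rule complex_norm_square[symmetric])
        then show ?thesis using w1 by (simp add: mult.commute)
      qed
      have "cnj ?w * (?w * cnj q - p) = cnj q - cnj ?w * p"
        by (simp only: right_diff_distrib mult.assoc[symmetric] cw mult_1)
      then have "cmod (cnj q - cnj ?w * p) = cmod (?w * cnj q - p)" using w1
        by (metis complex_mod_cnj norm_mult mult_1)
      moreover have "cmod (q - ?w * cnj p) = cmod (cnj q - cnj ?w * p)"
        by (metis complex_cnj_cnj complex_cnj_diff complex_cnj_mult complex_mod_cnj)
      ultimately show ?thesis by (simp add: norm_minus_commute)
    qed
    then have hq: "cmod (q - ?w * cnj p) = \<bar>cmod p - cmod q\<bar>" using e2 by simp
    have d1: "p - (p + ?w * cnj q)/2 = (p - ?w * cnj q)/2" by (simp add: field_simps)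
    have d2: "q - (q + ?w * cnj p)/2 = (q - ?w * cnj p)/2" by (simp add: field_simps)
    have n1: "cmod (p - (p + ?w * cnj q)/2) = \<bar>cmod p - cmod q\<bar> / 2" unfolding d1 norm_divide e2 by simp
    have n2: "cmod (q - (q + ?w * cnj p)/2) = \<bar>cmod p - cmod q\<bar> / 2" unfolding d2 norm_divide hq by simp
    show ?thesis unfolding Xm_diff hs_Xm n1 n2
      by (simp add: power2_eq_square field_simps)
  qed
  finally show "geometric_discord (Xm a b c d p q) \<le> 2*(cmod p - cmod q)^2 + ((a-c)^2 + (b-d)^2)" .
qed





lemma compl_aux: fixes x0 x1 y0 y1 X0 X1 Y0 Y1 :: complex
  assumes "X0 * x0 + X1 * x1 = 1" "Y0 * y0 + Y1 * y1 = 1" "X0 * y0 + X1 * y1 = 0" "Y0 * x0 + Y1 * x1 = 0"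
  shows "x0 * X0 + y0 * Y0 = 1" "x1 * X1 + y1 * Y1 = 1" "x0 * X1 + y0 * Y1 = 0" "x1 * X0 + y1 * Y0 = 0"
  using assms by algebra+

definition ON :: "complex \<Rightarrow> complex \<Rightarrow> complex \<Rightarrow> complex \<Rightarrow> bool" where
  "ON x0 x1 y0 y1 \<longleftrightarrow> cnj x0 * x0 + cnj x1 * x1 = 1 \<and> cnj y0 * y0 + cnj y1 * y1 = 1 \<and> cnj x0 * y0 + cnj x1 * y1 = 0"

lemma ON_compl: assumes "ON x0 x1 y0 y1"
  shows "x0 * cnj x0 + y0 * cnj y0 = 1" "x1 * cnj x1 + y1 * cnj y1 = 1" "x0 * cnj x1 + y0 * cnj y1 = 0" "x1 * cnj x0 + y1 * cnj y0 = 0"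
proof -
  have h: "cnj x0 * x0 + cnj x1 * x1 = 1" "cnj y0 * y0 + cnj y1 * y1 = 1" "cnj x0 * y0 + cnj x1 * y1 = 0"
    using assms by (auto simp: ON_def)
  have h4: "cnj y0 * x0 + cnj y1 * x1 = 0" using arg_cong[OF h(3), of cnj] by (simp add: mult.commute)
  note c = compl_aux[OF h h4]
  show "x0 * cnj x0 + y0 * cnj y0 = 1" "x1 * cnj x1 + y1 * cnj y1 = 1" "x0 * cnj x1 + y0 * cnj y1 = 0" "x1 * cnj x0 + y1 * cnj y0 = 0"
    by (rule c(1), rule c(2), rule c(3), rule c(4))
qed

lemma nsq: "of_real ((cmod z)^2) = z * cnj z" by (rule complex_norm_square)

lemma pars: assumes "ON x0 x1 y0 y1"
  shows "(cmod (cnj x0 * w0 + cnj x1 * w1))^2 + (cmod (cnj y0 * w0 + cnj y1 * w1))^2 = (cmod w0)^2 + (cmod w1)^2"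
proof -
  note c = ON_compl[OF assms]
  have "(of_real ((cmod (cnj x0 * w0 + cnj x1 * w1))^2 + (cmod (cnj y0 * w0 + cnj y1 * w1))^2) :: complex)
     = (cnj x0 * w0 + cnj x1 * w1) * (x0 * cnj w0 + x1 * cnj w1) + (cnj y0 * w0 + cnj y1 * w1) * (y0 * cnj w0 + y1 * cnj w1)"
    unfolding of_real_add nsq by simp
  also have "\<dots> = w0 * cnj w0 * (x0 * cnj x0 + y0 * cnj y0) + w1 * cnj w1 * (x1 * cnj x1 + y1 * cnj y1)
     + w0 * cnj w1 * (x1 * cnj x0 + y1 * cnj y0) + w1 * cnj w0 * (x0 * cnj x1 + y0 * cnj y1)"
    by (simp add: algebra_simps)
  also have "\<dots> = of_real ((cmod w0)^2 + (cmod w1)^2)"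
    unfolding c of_real_add nsq by simp
  finally show ?thesis using of_real_eq_iff by blast
qed

lemma pars': assumes "ON x0 x1 y0 y1"
  shows "(cmod (x0 * w0 + x1 * w1))^2 + (cmod (y0 * w0 + y1 * w1))^2 = (cmod w0)^2 + (cmod w1)^2"
proof -
  have e: "cmod (u0 * w0 + u1 * w1) = cmod (cnj u0 * cnj w0 + cnj u1 * cnj w1)" for u0 u1
    by (metis complex_cnj_add complex_cnj_mult complex_mod_cnj)
  show ?thesis unfolding e pars[OF assms] by simp
qed

definition bil :: "complex \<Rightarrow> complex \<Rightarrow> complex \<Rightarrow> complex \<Rightarrow> complex \<Rightarrow> complex \<Rightarrow> complex \<Rightarrow> complex \<Rightarrow> complex" where
  "bil Y00 Y01 Y10 Y11 u0 u1 v0 v1 = cnj u0 * (Y00 * v0 + Y01 * v1) + cnj u1 * (Y10 * v0 + Y11 * v1)"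

lemma mpars: assumes "ON x0 x1 y0 y1"
  shows "(cmod (bil Y00 Y01 Y10 Y11 x0 x1 y0 y1))^2 + (cmod (bil Y00 Y01 Y10 Y11 y0 y1 x0 x1))^2
     \<le> (cmod Y00)^2 + (cmod Y01)^2 + (cmod Y10)^2 + (cmod Y11)^2"
proof -
  have b: "bil Y00 Y01 Y10 Y11 u0 u1 v0 v1 = v0 * (cnj u0 * Y00 + cnj u1 * Y10) + v1 * (cnj u0 * Y01 + cnj u1 * Y11)" for u0 u1 v0 v1
    by (simp add: bil_def algebra_simps)
  have "(cmod (bil Y00 Y01 Y10 Y11 x0 x1 x0 x1))^2 + (cmod (bil Y00 Y01 Y10 Y11 x0 x1 y0 y1))^2
      = (cmod (cnj x0 * Y00 + cnj x1 * Y10))^2 + (cmod (cnj x0 * Y01 + cnj x1 * Y11))^2"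
    unfolding b by (rule pars'[OF assms])
  moreover have "(cmod (bil Y00 Y01 Y10 Y11 y0 y1 x0 x1))^2 + (cmod (bil Y00 Y01 Y10 Y11 y0 y1 y0 y1))^2
      = (cmod (cnj y0 * Y00 + cnj y1 * Y10))^2 + (cmod (cnj y0 * Y01 + cnj y1 * Y11))^2"
    unfolding b by (rule pars'[OF assms])
  moreover note pars[OF assms, of Y00 Y10] pars[OF assms, of Y01 Y11]
  moreover have "(cmod (bil Y00 Y01 Y10 Y11 x0 x1 x0 x1))^2 \<ge> 0" "(cmod (bil Y00 Y01 Y10 Y11 y0 y1 y0 y1))^2 \<ge> 0" by simp_all
  ultimately show ?thesis by linarith
qed

lemma LB: fixes \<alpha> \<gamma> \<mu> :: real
  assumes "ON x0 x1 y0 y1" and ag: "(\<alpha> - \<gamma>)^2 = 1/8" and mu: "\<mu>^2 = 1/32"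
  shows "2 * (cmod (\<alpha> * (cnj x0 * y0) + \<gamma> * (cnj x1 * y1)))^2 + 2 * \<mu>^2 * (cmod (cnj x0 * y1 + cnj x1 * y0))^2 \<ge> 1/16"
proof -
  have h: "cnj x0 * x0 + cnj x1 * x1 = 1" "cnj y0 * y0 + cnj y1 * y1 = 1" "cnj x0 * y0 + cnj x1 * y1 = 0"
    using assms(1) by (auto simp: ON_def)
  note c = ON_compl[OF assms(1)]
  have sq: "(cmod z)^2 + (cmod w)^2 = 1" if "z * cnj z + w * cnj w = 1" for z w
  proof -
    have "(of_real ((cmod z)^2 + (cmod w)^2) :: complex) = 1" unfolding of_real_add nsq by (rule that)
    then show ?thesis using of_real_eq_1_iff by blast
  qed
  have nx: "(cmod x0)^2 + (cmod x1)^2 = 1" using sq h(1) by (simp add: mult.commute)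
  have ny: "(cmod y0)^2 + (cmod y1)^2 = 1" using sq h(2) by (simp add: mult.commute)
  have nc: "(cmod x0)^2 + (cmod y0)^2 = 1" using sq c(1) by simp
  have y0: "cmod y0 = cmod x1" using nx nc by (metis add_left_cancel norm_ge_zero power2_eq_iff_nonneg)
  have y1: "cmod y1 = cmod x0" using nx ny nc by (metis add.commute add_left_cancel norm_ge_zero power2_eq_iff_nonneg)
  have e1: "\<alpha> * (cnj x0 * y0) + \<gamma> * (cnj x1 * y1) = of_real (\<alpha> - \<gamma>) * (cnj x0 * y0)"
  proof -
    have "cnj x1 * y1 = - (cnj x0 * y0)" using h(3) by (simp add: eq_neg_iff_add_eq_0 add.commute)
    then show ?thesis by (simp add: algebra_simps)
  qed
  have t1: "(cmod (\<alpha> * (cnj x0 * y0) + \<gamma> * (cnj x1 * y1)))^2 = 1/8 * (cmod x0)^2 * (cmod x1)^2"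
    unfolding e1 norm_mult norm_of_real complex_mod_cnj power_mult_distrib power2_abs ag y0 by simp
  define A where "A = (cmod x0)^2"
  define B where "B = (cmod x1)^2"
  have "cmod (cnj x0 * y1 + cnj x1 * y0) \<ge> cmod (cnj x0 * y1) - cmod (cnj x1 * y0)" by (rule norm_diff_ineq)
  then have r1: "cmod (cnj x0 * y1 + cnj x1 * y0) \<ge> A - B" using y0 y1 by (simp add: norm_mult A_def B_def power2_eq_square)
  have "cmod (cnj x0 * y1 + cnj x1 * y0) \<ge> cmod (cnj x1 * y0) - cmod (cnj x0 * y1)"
    by (metis add.commute norm_diff_ineq)
  then have r2: "cmod (cnj x0 * y1 + cnj x1 * y0) \<ge> B - A" using y0 y1 by (simp add: norm_mult A_def B_def power2_eq_square)
  have "(A - B)^2 \<le> (cmod (cnj x0 * y1 + cnj x1 * y0))^2"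
    using r1 r2 by (metis abs_le_iff abs_le_square_iff abs_of_nonneg norm_ge_zero minus_diff_eq)
  moreover have "A + B = 1" using nx by (simp add: A_def B_def)
  moreover have "(A+B)^2 = (A-B)^2 + 4*A*B" by (simp add: power2_eq_square algebra_simps)
  ultimately have "4*A*B + (cmod (cnj x0 * y1 + cnj x1 * y0))^2 \<ge> 1" by simp
  then show ?thesis unfolding t1 mu by (simp add: A_def B_def algebra_simps)
qed


definition Ob :: "complex^2 \<Rightarrow> complex^2 \<Rightarrow> qqmat \<Rightarrow> qmat" where
  "Ob x y X = (\<chi> j l. \<Sum>i\<in>UNIV. \<Sum>n\<in>UNIV. cnj (x$i) * X$(i,j)$(n,l) * y$n)"

lemma Ob_bil: "Ob x y X $ j $ l = bil (X$(0,j)$(0,l)) (X$(0,j)$(1,l)) (X$(1,j)$(0,l)) (X$(1,j)$(1,l)) (x$0) (x$1) (y$0) (y$1)"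
  by (simp add: Ob_def bil_def sum2 algebra_simps)

lemma ON_I: fixes \<psi> :: "2 \<Rightarrow> complex^2" assumes "\<forall>k l. cinner (\<psi> k) (\<psi> l) = (if k=l then 1 else 0)"
  shows "ON (\<psi> 0$0) (\<psi> 0$1) (\<psi> 1$0) (\<psi> 1$1)" "ON (\<psi> 1$0) (\<psi> 1$1) (\<psi> 0$0) (\<psi> 0$1)"
  using assms[rule_format, of 0 0] assms[rule_format, of 1 1] assms[rule_format, of 0 1] assms[rule_format, of 1 0]
  by (simp_all add: ON_def cinner_def sum2)

lemma hs_Ob: assumes "ON (x$0) (x$1) (y$0) (y$1)"
  shows "hs_norm2 (Ob x y X) + hs_norm2 (Ob y x X) \<le> hs_norm2 X"
proof -
  have m: "(cmod (Ob x y X $ j $ l))^2 + (cmod (Ob y x X $ j $ l))^2 \<le>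
    (cmod (X$(0,j)$(0,l)))^2 + (cmod (X$(0,j)$(1,l)))^2 + (cmod (X$(1,j)$(0,l)))^2 + (cmod (X$(1,j)$(1,l)))^2" for j l
    unfolding Ob_bil by (rule mpars[OF assms])
  show ?thesis unfolding hs_norm2_def sum2 sum22
    using m[of 0 0] m[of 0 1] m[of 1 0] m[of 1 1] by linarith
qed

lemma Ob_diff: "Ob x y (A - B) = Ob x y A - Ob x y B"
  unfolding vec_eq_iff by (simp add: Ob_bil bil_def algebra_simps)

lemma Ob_Omega: fixes \<psi> :: "2 \<Rightarrow> complex^2" and p :: "2 \<Rightarrow> real" and \<sigma> :: "2 \<Rightarrow> qmat"
  assumes o: "\<forall>k l. cinner (\<psi> k) (\<psi> l) = (if k=l then 1 else 0)"
  shows "Ob (\<psi> 0) (\<psi> 1) (\<Sum>k\<in>UNIV. p k *\<^sub>R kron (ket_bra (\<psi> k)) (\<sigma> k)) = 0"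
    "Ob (\<psi> 1) (\<psi> 0) (\<Sum>k\<in>UNIV. p k *\<^sub>R kron (ket_bra (\<psi> k)) (\<sigma> k)) = 0"
proof -
  have e: "Ob x y (\<Sum>k\<in>UNIV. p k *\<^sub>R kron (ket_bra (\<psi> k)) (\<sigma> k)) $ j $ l =
    (\<Sum>k\<in>UNIV. of_real (p k) * cinner x (\<psi> k) * cinner (\<psi> k) y * \<sigma> k $ j $ l)" for x y j l
  proof -
    have ent: "(\<Sum>k\<in>UNIV. p k *\<^sub>R kron (ket_bra (\<psi> k)) (\<sigma> k)) $ r $ s = (\<Sum>k\<in>UNIV. of_real (p k) * (\<psi> k $ fst r * cnj (\<psi> k $ fst s) * \<sigma> k $ snd r $ snd s))" for r s
      by (subst sumk_entry) (simp add: ket_bra_nth)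
    show ?thesis unfolding Ob_def vec_lambda_beta ent unfolding cinner_def sum2 fst_conv snd_conv
      by (simp add: algebra_simps)
  qed
  have c01: "cinner (\<psi> 0) (\<psi> 1) = 0" "cinner (\<psi> 1) (\<psi> 0) = 0" using o by auto
  show "Ob (\<psi> 0) (\<psi> 1) (\<Sum>k\<in>UNIV. p k *\<^sub>R kron (ket_bra (\<psi> k)) (\<sigma> k)) = 0"
    unfolding vec_eq_iff e by (simp add: sum2 c01)
  show "Ob (\<psi> 1) (\<psi> 0) (\<Sum>k\<in>UNIV. p k *\<^sub>R kron (ket_bra (\<psi> k)) (\<sigma> k)) = 0"
    unfolding vec_eq_iff e by (simp add: sum2 c01)
qed


lemma hs_Ob_rho0: fixes \<alpha> \<gamma> \<mu> :: real
  assumes on: "ON (x$0) (x$1) (y$0) (y$1)" and ag: "(\<alpha> - \<gamma>)^2 = 1/8" and mu: "\<mu>^2 = 1/32"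
  shows "hs_norm2 (Ob x y (Xm \<alpha> \<alpha> \<gamma> \<gamma> (of_real \<mu>) (of_real \<mu>))) \<ge> 1/16"
    "hs_norm2 (Ob y x (Xm \<alpha> \<alpha> \<gamma> \<gamma> (of_real \<mu>) (of_real \<mu>))) \<ge> 1/16"
proof -
  let ?r = "Xm \<alpha> \<alpha> \<gamma> \<gamma> (of_real \<mu>) (of_real \<mu>)"
  let ?E = "of_real \<alpha> * (cnj (x$0) * y$0) + of_real \<gamma> * (cnj (x$1) * y$1)"
  let ?C = "cnj (x$0) * y$1 + cnj (x$1) * y$0"
  have lb: "2 * (cmod ?E)^2 + 2 * \<mu>^2 * (cmod ?C)^2 \<ge> 1/16" by (rule LB[OF on ag mu])
  have E1: "Ob x y ?r $ 0 $ 0 = ?E" "Ob x y ?r $ 1 $ 1 = ?E" by (simp_all add: Ob_bil bil_def algebra_simps)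
  have E2: "Ob x y ?r $ 0 $ 1 = of_real \<mu> * ?C" "Ob x y ?r $ 1 $ 0 = of_real \<mu> * ?C" by (simp_all add: Ob_bil bil_def algebra_simps)
  have F1: "Ob y x ?r $ 0 $ 0 = cnj ?E" "Ob y x ?r $ 1 $ 1 = cnj ?E" by (simp_all add: Ob_bil bil_def algebra_simps)
  have F2: "Ob y x ?r $ 0 $ 1 = of_real \<mu> * cnj ?C" "Ob y x ?r $ 1 $ 0 = of_real \<mu> * cnj ?C" by (simp_all add: Ob_bil bil_def algebra_simps)
  have m2: "(cmod (of_real \<mu> * z))^2 = \<mu>^2 * (cmod z)^2" for z by (simp add: norm_mult power_mult_distrib)
  show "hs_norm2 (Ob x y ?r) \<ge> 1/16"
    unfolding hs_norm2_def sum2 E1 E2 m2 using lb by simp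
  show "hs_norm2 (Ob y x ?r) \<ge> 1/16"
    unfolding hs_norm2_def sum2 F1 F2 m2 complex_mod_cnj using lb by simp
qed

lemma lb_X: fixes \<alpha> \<gamma> \<mu> :: real
  assumes ag: "(\<alpha> - \<gamma>)^2 = 1/8" and mu: "\<mu>^2 = 1/32" and X: "X \<in> Omega0"
  shows "hs_norm2 (Xm \<alpha> \<alpha> \<gamma> \<gamma> (of_real \<mu>) (of_real \<mu>) - X) \<ge> 1/8"
proof -
  let ?r = "Xm \<alpha> \<alpha> \<gamma> \<gamma> (of_real \<mu>) (of_real \<mu>)"
  obtain \<psi> :: "2 \<Rightarrow> complex^2" and p :: "2 \<Rightarrow> real" and \<sigma> :: "2 \<Rightarrow> qmat"
    where o: "\<forall>k l. cinner (\<psi> k) (\<psi> l) = (if k = l then 1 else 0)"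
      and Xe: "X = (\<Sum>k\<in>UNIV. p k *\<^sub>R kron (ket_bra (\<psi> k)) (\<sigma> k))"
    using X unfolding Omega0_def by blast
  note on = ON_I[OF o]
  have z1: "Ob (\<psi> 0) (\<psi> 1) X = 0" and z2: "Ob (\<psi> 1) (\<psi> 0) X = 0" unfolding Xe using Ob_Omega[OF o] by blast+
  have eqs: "Ob (\<psi> 0) (\<psi> 1) (?r - X) = Ob (\<psi> 0) (\<psi> 1) ?r" "Ob (\<psi> 1) (\<psi> 0) (?r - X) = Ob (\<psi> 1) (\<psi> 0) ?r"
    unfolding Ob_diff z1 z2 by simp_all
  have "hs_norm2 (Ob (\<psi> 0) (\<psi> 1) ?r) + hs_norm2 (Ob (\<psi> 1) (\<psi> 0) ?r) \<le> hs_norm2 (?r - X)"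
    using hs_Ob[OF on(1), of "?r - X"] unfolding eqs .
  moreover note hs_Ob_rho0[OF on(1) ag mu]
  ultimately show ?thesis by linarith
qed




lemma q_veqI: fixes v w :: "complex^(2\<times>2)"
  assumes "\<forall>r\<in>{(0,0),(0,1),(1,0),(1,1)}. v$r = w$r" shows "v = w"
  using assms unfolding vec_eq_iff U22[symmetric] by blast

lemma rows_q: "rows (A::qqmat) = {A$(0,0), A$(0,1), A$(1,0), A$(1,1)}"
proof -
  have r: "row i A = A$i" for i by (simp add: row_def vec_eq_iff)
  have "rows A = (\<lambda>i. A$i) ` UNIV" unfolding rows_def r by auto
  also have "\<dots> = {A$(0,0), A$(0,1), A$(1,0), A$(1,1)}" unfolding U22 by simp
  finally show ?thesis .
qed

lemma rank_Xm2:
  assumes pos: "a > 0" "b > 0" "c > 0" "d > 0" and hp: "(cmod p)^2 = a*d" and hq: "(cmod q)^2 = b*c"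
  shows "rank (Xm a b c d p q) = 2"
proof -
  let ?X = "Xm a b c d p q"
  let ?r00 = "?X$(0,0)" and ?r01 = "?X$(0,1)" and ?r10 = "?X$(1,0)" and ?r11 = "?X$(1,1)"
  have pp: "cnj p * p = of_real a * of_real d"
    using hp complex_norm_square[of p] by (metis mult.commute of_real_mult)
  have qq: "cnj q * q = of_real b * of_real c"
    using hq complex_norm_square[of q] by (metis mult.commute of_real_mult)
  have a0: "(of_real a :: complex) \<noteq> 0" "(of_real b :: complex) \<noteq> 0" using pos by simp_all
  have e11: "?r11 = (cnj p / of_real a) *s ?r00"
    by (rule q_veqI) (use a0 pp in \<open>simp add: field_simps\<close>)
  have e10: "?r10 = (cnj q / of_real b) *s ?r01"
    by (rule q_veqI) (use a0 qq in \<open>simp add: field_simps mult.commute\<close>)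
  have s11: "?r11 \<in> vec.span {?r00, ?r01}" unfolding e11 by (intro vec.span_scale vec.span_base) simp
  have s10: "?r10 \<in> vec.span {?r00, ?r01}" unfolding e10 by (intro vec.span_scale vec.span_base) simp
  have n01: "?r01 \<notin> vec.span {}"
  proof
    assume "?r01 \<in> vec.span {}"
    then have "?r01 = 0" by simp
    then have "?r01 $ (0,1) = 0" by simp
    then show False using pos by simp
  qed
  have n00: "?r00 \<notin> vec.span {?r01}"
  proof
    assume "?r00 \<in> vec.span {?r01}"
    then obtain k where "?r00 = k *s ?r01" unfolding vec.span_singleton by auto
    then have "?r00 $ (0,0) = (k *s ?r01) $ (0,0)" by simp
    then show False using pos by simp
  qed
  have d1: "vec.dim {?r01} = 1" using vec.dim_insert[of ?r01 "{}"] n01 by simp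
  have d2: "vec.dim {?r00, ?r01} = 2" using vec.dim_insert[of ?r00 "{?r01}"] n00 d1 by simp
  have d3: "vec.dim {?r11, ?r00, ?r01} = 2" using vec.dim_insert[of ?r11 "{?r00, ?r01}"] s11 d2 by simp
  have s10': "?r10 \<in> vec.span {?r11, ?r00, ?r01}"
    using s10 vec.span_mono[of "{?r00, ?r01}" "{?r11, ?r00, ?r01}"] by auto
  have d4: "vec.dim {?r10, ?r11, ?r00, ?r01} = 2" using vec.dim_insert[of ?r10 "{?r11, ?r00, ?r01}"] s10' d3 by simp
  have "rows ?X = {?r10, ?r11, ?r00, ?r01}" unfolding rows_q by auto
  then show ?thesis unfolding row_rank_def_gen using d4 by simp
qed


definition al0 :: real where "al0 = (2 + sqrt 2)/8"
definition ga0 :: real where "ga0 = (2 - sqrt 2)/8"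
definition mu0 :: real where "mu0 = sqrt 2 / 8"

lemma consts0: "al0 \<ge> 0" "ga0 \<ge> 0" "mu0 \<ge> 0" "al0 + al0 + ga0 + ga0 = 1" "al0 * ga0 = 1/32"
  "mu0^2 = 1/32" "(al0 - ga0)^2 = 1/8"
proof -
  have s2: "sqrt 2 * sqrt 2 = 2" by simp
  have "sqrt 2 < 2" using real_sqrt_less_iff[of 2 4] real_sqrt_four by simp
  then show "al0 \<ge> 0" "ga0 \<ge> 0" "mu0 \<ge> 0" by (simp_all add: al0_def ga0_def mu0_def)
  show "al0 + al0 + ga0 + ga0 = 1" by (simp add: al0_def ga0_def field_simps)
  show "al0 * ga0 = 1/32" by (simp add: al0_def ga0_def algebra_simps s2)
  show "mu0^2 = 1/32" by (simp add: mu0_def power2_eq_square algebra_simps s2)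
  have d: "al0 - ga0 = sqrt 2 / 4" by (simp add: al0_def ga0_def field_simps)
  show "(al0 - ga0)^2 = 1/8" unfolding d by (simp add: power_divide)
qed

definition rho0 :: qqmat where "rho0 = Xm al0 al0 ga0 ga0 (of_real mu0) (of_real mu0)"

lemma rho0_X: "X_state rho0"
  unfolding rho0_def using consts0 by (intro X_state_Xm) simp_all

lemma rho0_sep: "separable rho0"
  unfolding separable_def
proof (intro exI conjI)
  let ?A = "\<lambda>k::nat. M2 (2*al0) (2*ga0) (of_real (if k = 0 then 2*mu0 else -(2*mu0)))"
  let ?B = "\<lambda>k::nat. M2 (1/2) (1/2) (of_real (if k = 0 then 1/2 else -(1/2)))"
  have sA: "is_state (?A k)" for k
  proof (rule state_M2)
    show "2*al0 \<ge> 0" "2*ga0 \<ge> 0" "2*al0 + 2*ga0 = 1" using consts0 by simp_all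
    have "(cmod (of_real (if k = 0 then 2*mu0 else -(2*mu0)) :: complex))^2 = 4 * mu0^2"
      by (simp add: power2_eq_square)
    then show "(cmod (of_real (if k = 0 then 2*mu0 else -(2*mu0)) :: complex))^2 \<le> 2*al0 * (2*ga0)"
      using consts0 by simp
  qed
  have sB: "is_state (?B k)" for k
    by (rule state_M2) (simp_all add: power2_eq_square)
  show "\<forall>k<2. (1/2::real) \<ge> 0 \<and> is_state (?A k) \<and> is_state (?B k)" using sA sB by simp
  show "(\<Sum>k<(2::nat). (1/2::real)) = 1" by simp
  show "rho0 = (\<Sum>k<2. (1/2::real) *\<^sub>R kron (?A k) (?B k))"
  proof (rule qq_eqI)
    have al: "of_real al0 = (of_real (2*al0) :: complex) / 2" "of_real ga0 = (of_real (2*ga0) :: complex) / 2"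
      "of_real mu0 = (of_real (2*mu0) :: complex) / 2" by simp_all
    show "\<forall>r\<in>{(0,0),(0,1),(1,0),(1,1)}. \<forall>s\<in>{(0,0),(0,1),(1,0),(1,1)}. rho0 $ r $ s = (\<Sum>k<2. (1/2::real) *\<^sub>R kron (?A k) (?B k)) $ r $ s"
      unfolding sep_entry rho0_def by (simp add: numeral_2_eq_2 field_simps)
  qed
qed

lemma Omega0_ne: "Omega0 \<noteq> {}"
proof -
  have "(\<Sum>k\<in>UNIV. (if k = (0::2) then 1 else 0) *\<^sub>R kron (ket_bra (ez k)) (sg 1 0)) \<in> Omega0"
    by (rule Omega0_I) (simp_all add: ez_orth sg_state sum2)
  then show ?thesis by blast
qed

lemma rho0_gd: "geometric_discord rho0 = 1/4"
proof -
  note c = consts0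
  have ub: "geometric_discord rho0 \<le> 4*((cmod (of_real mu0 :: complex))^2 + (cmod (of_real mu0 :: complex))^2)"
    unfolding rho0_def by (rule ub_X(1)) (use c in simp_all)
  have "(cmod (of_real mu0 :: complex))^2 = 1/32" using c by simp
  with ub have u: "geometric_discord rho0 \<le> 1/4" by simp
  have "1/8 \<le> Inf ((\<lambda>X. hs_norm2 (rho0 - X)) ` Omega0)"
  proof (rule cInf_greatest)
    show "(\<lambda>X. hs_norm2 (rho0 - X)) ` Omega0 \<noteq> {}" using Omega0_ne by simp
    fix v assume "v \<in> (\<lambda>X. hs_norm2 (rho0 - X)) ` Omega0"
    then obtain X where X: "X \<in> Omega0" and v: "v = hs_norm2 (rho0 - X)" by blast
    show "1/8 \<le> v" unfolding v rho0_def by (rule lb_X[OF c(7) c(6) X])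
  qed
  then have "geometric_discord rho0 \<ge> 1/4" unfolding geometric_discord_def by simp
  with u show ?thesis by simp
qed


lemma sep_X_bounds:
  assumes "X_state \<rho>" "separable \<rho>"
  obtains a b c d p q where "\<rho> = Xm a b c d p q" "a \<ge> 0" "b \<ge> 0" "c \<ge> 0" "d \<ge> 0" "a+b+c+d = 1"
    "(cmod p)^2 \<le> a*d" "(cmod q)^2 \<le> b*c" "(cmod p)^2 \<le> b*c" "(cmod q)^2 \<le> a*d"
    "geometric_discord \<rho> \<le> 4*((cmod p)^2 + (cmod q)^2)"
    "geometric_discord \<rho> \<le> 2*(cmod p - cmod q)^2 + ((a-c)^2 + (b-d)^2)"
proof -
  obtain a b c d p q where e: "\<rho> = Xm a b c d p q" and nn: "a \<ge> 0" "b \<ge> 0" "c \<ge> 0" "d \<ge> 0"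
    and s1: "a+b+c+d = 1" and h: "(cmod p)^2 \<le> a*d" "(cmod q)^2 \<le> b*c"
    using X_state_form[OF assms(1)] by blast
  have pp: "(cmod p)^2 \<le> b*c" "(cmod q)^2 \<le> a*d" using sep_ppt assms(2) unfolding e by blast+
  show ?thesis using that[OF e nn s1 h pp] ub_X[OF nn s1 h] unfolding e by blast
qed

theorem proposition1:
  shows "(\<forall>\<rho>. X_state \<rho> \<and> separable \<rho> \<longrightarrow> geometric_discord \<rho> \<le> 1/4)
       \<and> (\<exists>\<rho>. X_state \<rho> \<and> separable \<rho> \<and> geometric_discord \<rho> = 1/4)
       \<and> (\<forall>\<rho>. X_state \<rho> \<and> separable \<rho> \<and> geometric_discord \<rho> = 1/4 \<longrightarrow> rank \<rho> = 2)"
proof (intro conjI allI impI)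
  fix \<rho> assume A: "X_state \<rho> \<and> separable \<rho>"
  obtain a b c d p q where nn: "a \<ge> 0" "b \<ge> 0" "c \<ge> 0" "d \<ge> 0" and s1: "a+b+c+d = 1"
    and h: "(cmod p)^2 \<le> a*d" "(cmod q)^2 \<le> b*c" "(cmod p)^2 \<le> b*c" "(cmod q)^2 \<le> a*d"
    and g1: "geometric_discord \<rho> \<le> 4*((cmod p)^2 + (cmod q)^2)"
    and g2: "geometric_discord \<rho> \<le> 2*(cmod p - cmod q)^2 + ((a-c)^2 + (b-d)^2)"
    using sep_X_bounds A by metis
  have k: "min (8*((cmod p)^2+(cmod q)^2)) (4*(cmod p - cmod q)^2 + (2*(a-c)^2 + 2*(b-d)^2)) \<le> 1/2"
    by (rule key(1)[OF nn s1 norm_ge_zero norm_ge_zero h(1) h(3) h(4) h(2)])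
  show "geometric_discord \<rho> \<le> 1/4"
  proof (cases "8*((cmod p)^2+(cmod q)^2) \<le> 4*(cmod p - cmod q)^2 + (2*(a-c)^2 + 2*(b-d)^2)")
    case True
    then have "8*((cmod p)^2+(cmod q)^2) \<le> 1/2" using k by (simp add: min_def)
    then show ?thesis using g1 by linarith
  next
    case False
    then have "4*(cmod p - cmod q)^2 + (2*(a-c)^2 + 2*(b-d)^2) \<le> 1/2" using k by (simp add: min_def)
    then show ?thesis using g2 by linarith
  qed
next
  show "\<exists>\<rho>. X_state \<rho> \<and> separable \<rho> \<and> geometric_discord \<rho> = 1/4"
    using rho0_X rho0_sep rho0_gd by blast
next
  fix \<rho> assume A: "X_state \<rho> \<and> separable \<rho> \<and> geometric_discord \<rho> = 1/4"
  obtain a b c d p q where e: "\<rho> = Xm a b c d p q" and nn: "a \<ge> 0" "b \<ge> 0" "c \<ge> 0" "d \<ge> 0" and s1: "a+b+c+d = 1"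
    and h: "(cmod p)^2 \<le> a*d" "(cmod q)^2 \<le> b*c" "(cmod p)^2 \<le> b*c" "(cmod q)^2 \<le> a*d"
    and g1: "geometric_discord \<rho> \<le> 4*((cmod p)^2 + (cmod q)^2)"
    and g2: "geometric_discord \<rho> \<le> 2*(cmod p - cmod q)^2 + ((a-c)^2 + (b-d)^2)"
    using sep_X_bounds A by metis
  have gd: "geometric_discord \<rho> = 1/4" using A by blast
  have b1: "8*((cmod p)^2+(cmod q)^2) \<ge> 1/2" using g1 gd by linarith
  have b2: "4*(cmod p - cmod q)^2 + (2*(a-c)^2 + 2*(b-d)^2) \<ge> 1/2" using g2 gd by linarith
  have k: "cmod p = cmod q \<and> a*d = (cmod p)^2 \<and> b*c = (cmod p)^2"
    by (rule key(2)[OF nn s1 norm_ge_zero norm_ge_zero h(1) h(3) h(4) h(2) b1 b2])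
  have "(cmod p)^2 \<ge> 1/32" using b1 k by simp
  then have "(cmod p)^2 > 0" by linarith
  then have ad: "a*d > 0" and bc: "b*c > 0" using k by simp_all
  have pos: "a > 0" "b > 0" "c > 0" "d > 0"
    using ad bc nn by (auto simp: zero_less_mult_iff)
  show "rank \<rho> = 2" unfolding e
    by (rule rank_Xm2[OF pos]) (use k in simp_all)
qed


end
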